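(* Let $n\ge 1$, $0\le d\le n$, and let $g:\mathcal{X}_n\to[0,1]$ belong to $\mathcal{G}_n^{(d)}$, so that its angle map has the multilinear expansion \[ \Theta_g(b)=\sum_{S\subseteq[n],\,|S|\le d}\widehat{\Theta}_S\,\chi_S(b),\qquad \widehat{\Theta}_S=\sum_{T\subseteq S}(-1)^{|S\setminus T|}\,\Theta_g(\mathbf{1}_T). \] Then the encoding operator factors as \[ G_g=\prod_{S\subseteq[n],\,|S|\le d} C^S R_Y\bigl(\widehat{\Theta}_S\bigr) \] (the factors may be taken in any order). Consequently $G_g$ can be implemented with exactly $\sum_{k=0}^{d}\binom{n}{k}$ controlled-$R_Y$ gates, one for each subset $S\subseteq[n]$ with $|S|\le d$.
   Context: Let $\mathbb{B}=\{0,1\}$, $[n]=\{0,1,\dots,n-1\}$, $N=2^n$. The uniform grid is $\mathcal{X}_n=\{x_i=i/N: i=0,\dots,N-1\}$, and for $b=(b_0,\dots,b_{n-1})\in\mathbb{B}^n$ the grid index is $i(b)=\sum_k b_k2^k$. The angle map of $g:\mathcal{X}_n\to[0,1]$ is $\Theta_g:\mathbb{B}^n\to[0,\pi]$, $\Theta_g(b)=2\arcsin\bigl(\sqrt{g(x_{i(b)})}\bigr)$. For $S\subseteq[n]$, $\chi_S(b)=\prod_{j\in S}b_j$, and $\mathbf{1}_T\in\mathbb{B}^n$ is the indicator vector of $T\subseteq[n]$. Every $f:\mathbb{B}^n\to\mathbb{R}$ has a unique expansion $f=\sum_{S\subseteq[n]}\hat f_S\chi_S$; its multilinear degree is $\max\{|S|:\hat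 f_S\neq 0\}$. The class $\mathcal{G}_n^{(d)}$ is the set of $g:\mathcal{X}_n\to[0,1]$ with $\deg(\Theta_g)\le d$. Let $R_Y(\theta)=\begin{pmatrix}\cos(\theta/2)&-\sin(\theta/2)\\ \sin(\theta/2)&\cos(\theta/2)\end{pmatrix}$. On $\mathbb{C}^{N}\otimes\mathbb{C}^2$ with standard basis $\{\mathbf{u}_b\otimes \mathbf{u}^{(2)}_c\}$ (index register indexed by $b\in\mathbb{B}^n$, one ancilla qubit), the encoding operator $G_g$ is the block-diagonal unitary acting by $G_g(\mathbf{u}_b\otimes v)=\mathbf{u}_b\otimes R_Y(\Theta_g(b))v$ for all $v\in\mathbb{C}^2$; in particular $G_g(\mathbf{u}_{b}\otimes\mathbf{u}^{(2)}_0)=\mathbf{u}_{b}\otimes(\sqrt{1-g(x_{i(b)})}\,\mathbf{u}^{(2)}_0+\sqrt{g(x_{i(b)})}\,\mathbf{u}^{(2)}_1)$. For $S\subseteq[n]$ and $\alpha\in\mathbb{R}$, the controlled gate $C^SR_Y(\alpha)$ acts by $\mathbf{u}_b\otimes v\mapsto \mathbf{u}_b\otimes R_Y(\alpha\,\chi_S(b))v$, i.e. it applies $R_Y(\alpha)$ to the ancilla iff all index qubits in $S$ equal $1$ (for $S=\emptyset$ it is an unconditional rotation). *)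

theory Defs
  imports Complex_Main
begin

text \<open>Bit strings b in B^n are encoded by their support sets T \<subseteq> {..<n}
  (b_k = 1 iff k \<in> T); so the indicator vector 1_T is just T.\<close>

definition grid_index :: "nat set \<Rightarrow> nat" where
  "grid_index T = (\<Sum>k\<in>T. 2 ^ k)"

definition grid_pt :: "nat \<Rightarrow> nat \<Rightarrow> real" where
  "grid_pt n i = real i / 2 ^ n"

definition angle_map :: "nat \<Rightarrow> (real \<Rightarrow> real) \<Rightarrow> nat set \<Rightarrow> real" where
  "angle_map n g T = 2 * arcsin (sqrt (g (grid_pt n (grid_index T))))"

definition chi :: "nat set \<Rightarrow> nat set \<Rightarrow> real" where
  "chi S T = (if S \<subseteq> T then 1 else 0)"

definition mldeg_le :: "nat \<Rightarrow> (nat set \<Rightarrow> real) \<Rightarrow> nat \<Rightarrow> bool" where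
  "mldeg_le n f d \<longleftrightarrow> (\<exists>c :: nat set \<Rightarrow> real.
      (\<forall>T. T \<subseteq> {..<n} \<longrightarrow> f T = (\<Sum>S\<in>Pow {..<n}. c S * chi S T)) \<and>
      (\<forall>S. S \<subseteq> {..<n} \<and> d < card S \<longrightarrow> c S = 0))"

definition in_G_class :: "nat \<Rightarrow> nat \<Rightarrow> (real \<Rightarrow> real) \<Rightarrow> bool" where
  "in_G_class n d g \<longleftrightarrow> (\<forall>i < 2 ^ n. 0 \<le> g (grid_pt n i) \<and> g (grid_pt n i) \<le> 1)
                          \<and> mldeg_le n (angle_map n g) d"

definition theta_hat :: "nat \<Rightarrow> (real \<Rightarrow> real) \<Rightarrow> nat set \<Rightarrow> real" where
  "theta_hat n g S = (\<Sum>T\<in>Pow S. (-1) ^ card (S - T) * angle_map n g T)"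

text \<open>R_Y(theta) as a 2x2 matrix indexed by bool (False = |0>, True = |1>): entry (row, col).\<close>
definition RY :: "real \<Rightarrow> bool \<Rightarrow> bool \<Rightarrow> real" where
  "RY \<theta> r c = (if r = c then cos (\<theta>/2) else if r then sin (\<theta>/2) else - sin (\<theta>/2))"

text \<open>States of C^N \<otimes> C^2: amplitude of basis vector u_b \<otimes> u_c is v b c.
  Block-diagonal operator acting by the 2x2 block M b on the ancilla.\<close>
type_synonym state = "nat set \<Rightarrow> bool \<Rightarrow> complex"

definition block_op :: "(nat set \<Rightarrow> bool \<Rightarrow> bool \<Rightarrow> real) \<Rightarrow> state \<Rightarrow> state" where
  "block_op M v = (\<lambda>b r. \<Sum>c\<in>UNIV. complex_of_real (M b r c) * v b c)"

definition encoding_op :: "nat \<Rightarrow> (real \<Rightarrow> real) \<Rightarrow> state \<Rightarrow> state" where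
  "encoding_op n g = block_op (\<lambda>b. RY (angle_map n g b))"

definition CRY :: "nat set \<Rightarrow> real \<Rightarrow> state \<Rightarrow> state" where
  "CRY S \<alpha> = block_op (\<lambda>b. RY (\<alpha> * chi S b))"

text \<open>Ordered product of the gates C^S R_Y(theta_hat S) for S in the list
  (leftmost factor applied last).\<close>
definition gate_product :: "nat \<Rightarrow> (real \<Rightarrow> real) \<Rightarrow> nat set list \<Rightarrow> state \<Rightarrow> state" where
  "gate_product n g Ss = foldr (\<lambda>S acc. CRY S (theta_hat n g S) \<circ> acc) Ss id"

end

theory Submission
  imports Defs
begin

lemma mobius_kernel:
  assumes "finite S"
  shows "(\<Sum>T\<in>Pow S. (-1::real) ^ card (S - T) * chi U T) = (if U = S then 1 else 0)"
  using assms
proof (induction S arbitrary: U rule: finite_induct)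
  case empty
  then show ?case by (auto simp: chi_def)
next
  case (insert x S)
  have inj: "inj_on (insert x) (Pow S)"
    using insert.hyps(2) by (auto simp: inj_on_def)
  have disj: "Pow S \<inter> insert x ` Pow S = {}" using insert.hyps(2) by auto
  have "(\<Sum>T\<in>Pow (insert x S). (-1::real) ^ card (insert x S - T) * chi U T)
      = (\<Sum>T\<in>Pow S. (-1::real) ^ card (insert x S - T) * chi U T)
        + (\<Sum>T\<in>Pow S. (-1::real) ^ card (insert x S - insert x T) * chi U (insert x T))"
    unfolding Pow_insert
    by (subst sum.union_disjoint) (use insert.hyps disj inj in \<open>auto simp: sum.reindex\<close>)
  also have "\<dots> = (\<Sum>T\<in>Pow S. (-1::real) ^ card (S - T) * (chi U (insert x T) - chi U T))"
  proof -
    have c1: "card (insert x S - T) = Suc (card (S - T))" if "T \<subseteq> S" for T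
    proof -
      have "insert x S - T = insert x (S - T)" using that insert.hyps(2) by auto
      then show ?thesis using insert.hyps by simp
    qed
    have c2: "insert x S - insert x T = S - T" if "T \<subseteq> S" for T
      using that insert.hyps(2) by auto
    show ?thesis
      unfolding sum.distrib[symmetric] by (rule sum.cong) (use insert.hyps(2) in \<open>auto simp: c1 c2 algebra_simps Diff_insert0\<close>)
  qed
  also have "\<dots> = (if U = insert x S then 1 else 0)"
  proof (cases "x \<in> U")
    case False
    then have "chi U (insert x T) = chi U T" for T by (auto simp: chi_def)
    then show ?thesis using False by auto
  next
    case True
    have "T \<in> Pow S \<Longrightarrow> chi U (insert x T) - chi U T = chi (U - {x}) T" for T
      using True insert.hyps(2) by (auto simp: chi_def)
    then have "(\<Sum>T\<in>Pow S. (-1::real) ^ card (S - T) * (chi U (insert x T) - chi U T))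
       = (\<Sum>T\<in>Pow S. (-1::real) ^ card (S - T) * chi (U - {x}) T)" by (intro sum.cong) auto
    also have "\<dots> = (if U - {x} = S then 1 else 0)" by (rule insert.IH)
    also have "\<dots> = (if U = insert x S then 1 else 0)"
      using True insert.hyps(2) by auto
    finally show ?thesis .
  qed
  finally show ?case .
qed

lemma coef_eq:
  assumes f: "\<forall>T. T \<subseteq> {..<n} \<longrightarrow> f T = (\<Sum>U\<in>Pow {..<n}. c U * chi U T)"
    and S: "S \<subseteq> {..<n}"
  shows "(\<Sum>T\<in>Pow S. (-1::real) ^ card (S - T) * f T) = c S"
proof -
  have fin: "finite S" using S finite_subset by blast
  have "(\<Sum>T\<in>Pow S. (-1::real) ^ card (S - T) * f T)
      = (\<Sum>T\<in>Pow S. \<Sum>U\<in>Pow {..<n}. c U * ((-1::real) ^ card (S - T) * chi U T))"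
    by (intro sum.cong) (use f S in \<open>auto simp: sum_distrib_left algebra_simps\<close>)
  also have "\<dots> = (\<Sum>U\<in>Pow {..<n}. c U * (\<Sum>T\<in>Pow S. (-1::real) ^ card (S - T) * chi U T))"
    by (subst sum.swap) (simp add: sum_distrib_left)
  also have "\<dots> = (\<Sum>U\<in>Pow {..<n}. c U * (if U = S then 1 else 0))"
    by (simp add: mobius_kernel[OF fin])
  also have "\<dots> = c S" using S by (simp add: if_distrib cong: if_cong)
  finally show ?thesis .
qed

lemma RY_mult: "(\<Sum>k\<in>UNIV. RY a r k * RY b k c) = RY (a + b) r c"
proof -
  have h: "(a + b) / 2 = a/2 + b/2" by simp
  show ?thesis unfolding UNIV_bool RY_def h cos_add sin_add
    by (cases r; cases c) (simp_all add: algebra_simps)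
qed

lemma block_comp: "block_op (\<lambda>b. RY (x b)) (block_op (\<lambda>b. RY (y b)) v) = block_op (\<lambda>b. RY (x b + y b)) v"
proof (intro ext)
  fix b r
  show "block_op (\<lambda>b. RY (x b)) (block_op (\<lambda>b. RY (y b)) v) b r = block_op (\<lambda>b. RY (x b + y b)) v b r"
    unfolding block_op_def RY_mult[symmetric]
    by (simp add: UNIV_bool algebra_simps)
qed

lemma block_id: "block_op (\<lambda>b. RY 0) = id"
  by (intro ext) (simp add: block_op_def RY_def UNIV_bool)

lemma gate_eq: "gate_product n g Ss = block_op (\<lambda>b. RY (\<Sum>S\<leftarrow>Ss. theta_hat n g S * chi S b))"
proof (induction Ss)
  case Nil
  then show ?case by (simp add: gate_product_def block_id)
next
  case (Cons S Ss)
  then show ?case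
    by (auto simp: gate_product_def CRY_def block_comp intro!: ext)
qed

lemma card_small_subsets:
  "card {S. S \<subseteq> {..<n} \<and> card S \<le> d} = (\<Sum>k\<le>d. n choose k)"
proof -
  have eq: "{S. S \<subseteq> {..<n} \<and> card S \<le> d} = (\<Union>k\<in>{..d}. {S. S \<subseteq> {..<n} \<and> card S = k})"
    by auto
  have "card (\<Union>k\<in>{..d}. {S. S \<subseteq> {..<n} \<and> card S = k}) = (\<Sum>k\<le>d. card {S. S \<subseteq> {..<n} \<and> card S = k})"
    by (rule card_UN_disjoint) (auto intro: finite_subset[of _ "Pow {..<n}"])
  also have "\<dots> = (\<Sum>k\<le>d. n choose k)" by (simp add: n_subsets)
  finally show ?thesis using eq by simp
qed

theorem mainTheorem1:
  fixes n d :: nat and g :: "real \<Rightarrow> real"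
  assumes "1 \<le> n" and "d \<le> n" and "in_G_class n d g"
  shows "(\<forall>T. T \<subseteq> {..<n} \<longrightarrow>
            angle_map n g T = (\<Sum>S\<in>{S. S \<subseteq> {..<n} \<and> card S \<le> d}. theta_hat n g S * chi S T))
       \<and> (\<forall>Ss. distinct Ss \<and> set Ss = {S. S \<subseteq> {..<n} \<and> card S \<le> d} \<longrightarrow>
            (\<forall>v T c. T \<subseteq> {..<n} \<longrightarrow> gate_product n g Ss v T c = encoding_op n g v T c)
            \<and> length Ss = (\<Sum>k\<le>d. n choose k))"
proof -
  obtain c where cf: "\<forall>T. T \<subseteq> {..<n} \<longrightarrow> angle_map n g T = (\<Sum>S\<in>Pow {..<n}. c S * chi S T)"
    and cz: "\<forall>S. S \<subseteq> {..<n} \<and> d < card S \<longrightarrow> c S = 0"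
    using assms(3) unfolding in_G_class_def mldeg_le_def by blast
  have th: "theta_hat n g S = c S" if "S \<subseteq> {..<n}" for S
    unfolding theta_hat_def using coef_eq[OF cf that] .
  have P1: "angle_map n g T = (\<Sum>S\<in>{S. S \<subseteq> {..<n} \<and> card S \<le> d}. theta_hat n g S * chi S T)"
    if T: "T \<subseteq> {..<n}" for T
  proof -
    have sub: "{S. S \<subseteq> {..<n} \<and> card S \<le> d} \<subseteq> Pow {..<n}" by auto
    have "angle_map n g T = (\<Sum>S\<in>Pow {..<n}. c S * chi S T)" using cf T by blast
    also have "\<dots> = (\<Sum>S\<in>{S. S \<subseteq> {..<n} \<and> card S \<le> d}. c S * chi S T)"
      by (intro sum.mono_neutral_left[symmetric] finite_Pow_iff[THEN iffD2] finite_lessThan sub)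
         (use cz in \<open>auto simp: not_le\<close>)
    also have "\<dots> = (\<Sum>S\<in>{S. S \<subseteq> {..<n} \<and> card S \<le> d}. theta_hat n g S * chi S T)"
      by (intro sum.cong) (auto simp: th)
    finally show ?thesis .
  qed
  show ?thesis
  proof (intro conjI allI impI)
    fix T assume "T \<subseteq> {..<n}" then show "angle_map n g T = (\<Sum>S\<in>{S. S \<subseteq> {..<n} \<and> card S \<le> d}. theta_hat n g S * chi S T)"
      by (rule P1)
  next
    fix Ss :: "nat set list" assume Ss: "distinct Ss \<and> set Ss = {S. S \<subseteq> {..<n} \<and> card S \<le> d}"
    show "length Ss = (\<Sum>k\<le>d. n choose k)"
      using Ss distinct_card card_small_subsets by metis
    fix v T c assume T: "T \<subseteq> {..<n}"
    have "(\<Sum>S\<leftarrow>Ss. theta_hat n g S * chi S T) = angle_map n g T"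
      using Ss P1[OF T] by (simp add: sum_list_distinct_conv_sum_set)
    then show "gate_product n g Ss v T c = encoding_op n g v T c"
      by (simp add: gate_eq encoding_op_def block_op_def)
  qed
qed

end
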